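(* Let $M\ge1$, $T\ge M+1$, $n\ge1$ be integers and $p=\frac1{M+1}$. Let $\mathbf{c}_1,\dots,\mathbf{c}_T\in\{0,1\}^n$ be random words whose $Tn$ bits are independent, each equal to $1$ with probability $p$. Let $E_{\mathrm{id}}$ be the event that there exist $t\in\{1,\dots,T\}$, a set $S\subseteq\{1,\dots,T\}\setminus\{t\}$ with $|S|=M$, and shifts $s_u\in\{0,\dots,n-1\}$ ($u\in S$) such that $\bigvee_{u\in S}\sigma_{s_u}(\mathbf{c}_u)$ covers $\mathbf{c}_t$. Then \[\Pr(E_{\mathrm{id}})\le \exp\!\Big((M+1)\ln T+M\ln n-\tfrac{n}{M+1}\mathrm{e}^{-1}\Big).\]
   Context: $\vee$ is componentwise Boolean OR. A vector $\mathbf{y}$ covers $\mathbf{z}$ if $y_i\ge z_i$ for all $i$. For $\mathbf{c}\in\{0,1\}^n$ and $s\in\{0,\dots,n-1\}$, $\sigma_s(\mathbf{c})$ is defined by $(\sigma_s(\mathbf{c}))_i=c_{i-s}$ if $i>s$ and $0$ otherwise. *)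

theory Defs
  imports "HOL-Probability.Probability"
begin

text \<open>A configuration of the T words is a map c :: nat \<times> nat \<Rightarrow> bool, where
  c (u, i) is bit i (1 \<le> i \<le> n) of word u (1 \<le> u \<le> T).\<close>

definition word :: "(nat \<times> nat \<Rightarrow> bool) \<Rightarrow> nat \<Rightarrow> nat \<Rightarrow> bool" where
  "word c u = (\<lambda>i. c (u, i))"

definition shift :: "nat \<Rightarrow> (nat \<Rightarrow> bool) \<Rightarrow> nat \<Rightarrow> bool" where
  "shift s w i = (if i > s then w (i - s) else False)"

definition covers :: "nat \<Rightarrow> (nat \<Rightarrow> bool) \<Rightarrow> (nat \<Rightarrow> bool) \<Rightarrow> bool" where
  "covers n y z = (\<forall>i\<in>{1..n}. z i \<longrightarrow> y i)"

definition bigor :: "nat set \<Rightarrow> (nat \<Rightarrow> nat \<Rightarrow> bool) \<Rightarrow> nat \<Rightarrow> bool" where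
  "bigor S f = (\<lambda>i. \<exists>u\<in>S. f u i)"

definition E_id :: "nat \<Rightarrow> nat \<Rightarrow> nat \<Rightarrow> (nat \<times> nat \<Rightarrow> bool) set" where
  "E_id T M n = {c. \<exists>t\<in>{1..T}. \<exists>S. S \<subseteq> {1..T} - {t} \<and> card S = M \<and>
      (\<exists>sh :: nat \<Rightarrow> nat. (\<forall>u\<in>S. sh u < n) \<and>
         covers n (bigor S (\<lambda>u. shift (sh u) (word c u))) (word c t))}"

definition bits_pmf :: "nat \<Rightarrow> nat \<Rightarrow> real \<Rightarrow> (nat \<times> nat \<Rightarrow> bool) pmf" where
  "bits_pmf T n p = Pi_pmf ({1..T} \<times> {1..n}) False (\<lambda>_. bernoulli_pmf p)"

end

theory Submission
  imports Defs
begin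

lemma prob_Pi_pmf_restrict:
  assumes "finite I" "J \<subseteq> I" "\<And>c c'. (\<forall>x\<in>J. c x = c' x) \<Longrightarrow> P c = P c'"
  shows "measure_pmf.prob (Pi_pmf I d q) {c. P c} = measure_pmf.prob (Pi_pmf J d q) {c. P c}"
proof -
  have "Pi_pmf J d q = map_pmf (\<lambda>f x. if x \<in> J then f x else d) (Pi_pmf I d q)"
    by (rule Pi_pmf_subset) (use assms in auto)
  then have "measure_pmf.prob (Pi_pmf J d q) {c. P c} =
     measure_pmf.prob (Pi_pmf I d q) ((\<lambda>f x. if x \<in> J then f x else d) -` {c. P c})" by simp
  also have "(\<lambda>f x. if x \<in> J then f x else d) -` {c. P c} = {c. P c}"
  proof -
    have "P (\<lambda>x. if x \<in> J then f x else d) = P f" for f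
      by (rule assms(3)) auto
    then show ?thesis by auto
  qed
  finally show ?thesis by simp
qed

lemma prob_Pi_pmf_split:
  assumes "finite A" "finite B" "A \<inter> B = {}"
   "\<And>c c'. (\<forall>x\<in>A. c x = c' x) \<Longrightarrow> P c = P c'"
   "\<And>c c'. (\<forall>x\<in>B. c x = c' x) \<Longrightarrow> Q c = Q c'"
  shows "measure_pmf.prob (Pi_pmf (A \<union> B) d q) {c. P c \<and> Q c} =
         measure_pmf.prob (Pi_pmf A d q) {c. P c} * measure_pmf.prob (Pi_pmf B d q) {c. Q c}"
proof -
  let ?h = "\<lambda>(f,g) x. if x \<in> A then f x else g x"
  let ?PA = "Pi_pmf A d q" and ?PB = "Pi_pmf B d q"
  have "measure_pmf.prob (Pi_pmf (A \<union> B) d q) {c. P c \<and> Q c} =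
        measure_pmf.prob (pair_pmf ?PA ?PB) (?h -` {c. P c \<and> Q c})"
    by (simp add: Pi_pmf_union[OF assms(1-3)])
  also have "\<dots> = measure_pmf.prob (pair_pmf ?PA ?PB) ((?h -` {c. P c \<and> Q c}) \<inter> set_pmf (pair_pmf ?PA ?PB))"
    by (rule measure_Int_set_pmf[symmetric])
  also have "(?h -` {c. P c \<and> Q c}) \<inter> set_pmf (pair_pmf ?PA ?PB) =
       ({c. P c} \<inter> set_pmf ?PA) \<times> ({c. Q c} \<inter> set_pmf ?PB)"
  proof -
    have 1: "P (?h (f,g)) = P f" for f g
      by (rule assms(4)) auto
    have 2: "Q (?h (f,g)) = Q g" if "g \<in> set_pmf ?PB" "f \<in> set_pmf ?PA" for f g
    proof (rule assms(5), intro ballI)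
      fix x assume "x \<in> B"
      then show "?h (f, g) x = g x" using assms(3) by auto
    qed
    show ?thesis using 1 2 by auto
  qed
  also have "measure_pmf.prob (pair_pmf ?PA ?PB) (({c. P c} \<inter> set_pmf ?PA) \<times> ({c. Q c} \<inter> set_pmf ?PB))
     = measure_pmf.prob ?PA ({c. P c} \<inter> set_pmf ?PA) * measure_pmf.prob ?PB ({c. Q c} \<inter> set_pmf ?PB)"
    by (rule measure_pmf_prob_product) (auto intro: countable_subset[OF _ countable_set_pmf])
  finally show ?thesis by (simp add: measure_Int_set_pmf)
qed

lemma prob_Pi_pmf_prod:
  assumes "finite I" "finite K" "\<And>k. k\<in>K \<Longrightarrow> D k \<subseteq> I"
    "\<And>k l. k\<in>K \<Longrightarrow> l\<in>K \<Longrightarrow> k\<noteq>l \<Longrightarrow> D k \<inter> D l = {}"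
    "\<And>k c c'. k\<in>K \<Longrightarrow> (\<forall>x\<in>D k. c x = c' x) \<Longrightarrow> B k c = B k c'"
  shows "measure_pmf.prob (Pi_pmf I d q) {c. \<forall>k\<in>K. B k c} =
         (\<Prod>k\<in>K. measure_pmf.prob (Pi_pmf I d q) {c. B k c})"
  using assms(2-5)
proof (induction K rule: finite_induct)
  case empty
  then show ?case by simp
next
  case (insert a K)
  define U where "U = \<Union>(D ` K)"
  have fU: "finite U" unfolding U_def using insert.prems(1) assms(1) insert.hyps(1)
    by (meson finite_UN_I finite_subset insertCI)
  have fDa: "finite (D a)" using insert.prems(1) assms(1) by (meson finite_subset insertCI)
  have disj: "D a \<inter> U = {}" unfolding U_def using insert.prems(2) insert.hyps(2) by fastforce
  have UI: "U \<subseteq> I" unfolding U_def using insert.prems(1) by auto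
  have depK: "(\<forall>k\<in>K. B k c) = (\<forall>k\<in>K. B k c')" if "\<forall>x\<in>U. c x = c' x" for c c'
    using insert.prems(3) that unfolding U_def by (metis UN_I insertCI)
  have depA: "B a c = B a c'" if "\<forall>x\<in>D a. c x = c' x" for c c'
    using insert.prems(3) that by blast
  have depAK: "(B a c \<and> (\<forall>k\<in>K. B k c)) = (B a c' \<and> (\<forall>k\<in>K. B k c'))"
    if "\<forall>x\<in>D a \<union> U. c x = c' x" for c c'
    using depA[of c c'] depK[of c c'] that by auto
  have "{c. \<forall>k\<in>insert a K. B k c} = {c. B a c \<and> (\<forall>k\<in>K. B k c)}" by auto
  then have "measure_pmf.prob (Pi_pmf I d q) {c. \<forall>k\<in>insert a K. B k c} =
     measure_pmf.prob (Pi_pmf I d q) {c. B a c \<and> (\<forall>k\<in>K. B k c)}" by simp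
  also have "\<dots> = measure_pmf.prob (Pi_pmf (D a \<union> U) d q) {c. B a c \<and> (\<forall>k\<in>K. B k c)}"
    by (rule prob_Pi_pmf_restrict[OF assms(1)]) (use insert.prems(1) UI depAK in auto)
  also have "\<dots> = measure_pmf.prob (Pi_pmf (D a) d q) {c. B a c} *
                  measure_pmf.prob (Pi_pmf U d q) {c. \<forall>k\<in>K. B k c}"
    by (rule prob_Pi_pmf_split[OF fDa fU disj]) (use depA depK in auto)
  also have "measure_pmf.prob (Pi_pmf (D a) d q) {c. B a c} = measure_pmf.prob (Pi_pmf I d q) {c. B a c}"
    by (rule prob_Pi_pmf_restrict[OF assms(1), symmetric]) (use insert.prems(1) depA in auto)
  also have "measure_pmf.prob (Pi_pmf U d q) {c. \<forall>k\<in>K. B k c} = measure_pmf.prob (Pi_pmf I d q) {c. \<forall>k\<in>K. B k c}"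
    by (rule prob_Pi_pmf_restrict[OF assms(1), symmetric]) (use UI depK in auto)
  also have "\<dots> = (\<Prod>k\<in>K. measure_pmf.prob (Pi_pmf I d q) {c. B k c})"
    by (rule insert.IH) (use insert.prems in auto)
  finally show ?case using insert.hyps by simp
qed

lemma prob_Pi_pmf_coord:
  assumes "finite I" "x \<in> I"
  shows "measure_pmf.prob (Pi_pmf I d q) {c. c x = b} = pmf (q x) b"
proof -
  have "pmf (q x) b = measure_pmf.prob (map_pmf (\<lambda>f. f x) (Pi_pmf I d q)) {b}"
    using Pi_pmf_component[OF assms(1), of x d q] assms(2) by (simp add: measure_pmf_single)
  also have "\<dots> = measure_pmf.prob (Pi_pmf I d q) {c. c x = b}"
    by (simp add: vimage_def)
  finally show ?thesis by simp
qed

lemma cov_bound: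
  fixes t :: nat and S :: "nat set" and sh :: "nat \<Rightarrow> nat" and p :: real
  assumes p: "0 \<le> p" "p \<le> 1" and t: "t \<in> {1..T}" and S: "S \<subseteq> {1..T} - {t}" "card S = M"
    and sh: "\<forall>u\<in>S. sh u < n"
  shows "measure_pmf.prob (bits_pmf T n p)
           {c. covers n (bigor S (\<lambda>u. shift (sh u) (word c u))) (word c t)} \<le> (1 - p*(1-p)^M)^n"
proof -
  define I where "I = {1..T} \<times> {1..n}"
  define Q where "Q = Pi_pmf I False (\<lambda>_. bernoulli_pmf p)"
  define Dp where "Dp i = insert (t,i) ((\<lambda>u. (u, i - sh u)) ` {u\<in>S. sh u < i})" for i
  define Bp where "Bp i c = (c (t,i) \<longrightarrow> (\<exists>u\<in>S. sh u < i \<and> c (u, i - sh u)))" for i c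
  have finS: "finite S" using S by (meson finite_Diff finite_atLeastAtMost finite_subset)
  have fin: "finite I" unfolding I_def by simp
  have eqset: "{c. covers n (bigor S (\<lambda>u. shift (sh u) (word c u))) (word c t)} = {c. \<forall>i\<in>{1..n}. Bp i c}"
    by (auto simp: covers_def bigor_def shift_def word_def Bp_def)
  have Dsub: "Dp i \<subseteq> I" if "i \<in> {1..n}" for i
    using that t S unfolding Dp_def I_def by auto
  have disj: "Dp i \<inter> Dp j = {}" if "i \<in> {1..n}" "j \<in> {1..n}" "i \<noteq> j" for i j
    using that S unfolding Dp_def by auto
  have dep: "Bp i c = Bp i c'" if "\<forall>x\<in>Dp i. c x = c' x" for i c c'
    using that unfolding Dp_def Bp_def by auto
  have prodeq: "measure_pmf.prob Q {c. \<forall>i\<in>{1..n}. Bp i c} = (\<Prod>i\<in>{1..n}. measure_pmf.prob Q {c. Bp i c})"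
    unfolding Q_def by (rule prob_Pi_pmf_prod[OF fin _ _ _ dep, where D=Dp]) (use Dsub disj in auto)
  have each: "measure_pmf.prob Q {c. Bp i c} \<le> 1 - p*(1-p)^M" if i: "i \<in> {1..n}" for i
  proof -
    have "{c. Bp i c} = space (measure_pmf Q) - {c. \<not> Bp i c}" by auto
    then have c1: "measure_pmf.prob Q {c. Bp i c} = 1 - measure_pmf.prob Q {c. \<not> Bp i c}"
      using measure_pmf.prob_compl[of "{c. \<not> Bp i c}" Q] by simp
    have nb: "{c. \<not> Bp i c} = {c. \<forall>x\<in>Dp i. c x = (x = (t,i))}"
      using S unfolding Dp_def Bp_def by auto
    have finD: "finite (Dp i)" unfolding Dp_def using finS by simp
    have coord: "measure_pmf.prob Q {c. c x = (x = (t,i))} = pmf (bernoulli_pmf p) (x = (t,i))"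
      if "x \<in> Dp i" for x
    proof -
      have "x \<in> I" using Dsub[OF i] that by blast
      then show ?thesis unfolding Q_def by (rule prob_Pi_pmf_coord[OF fin])
    qed
    have rest: "(\<Prod>x\<in>Dp i - {(t,i)}. pmf (bernoulli_pmf p) (x = (t,i))) = (\<Prod>x\<in>Dp i - {(t,i)}. 1 - p)"
      by (rule prod.cong[OF refl]) (use p in auto)
    have "measure_pmf.prob Q {c. \<forall>x\<in>Dp i. c x = (x = (t,i))} =
          (\<Prod>x\<in>Dp i. measure_pmf.prob Q {c. c x = (x = (t,i))})"
      unfolding Q_def by (rule prob_Pi_pmf_prod[OF fin finD, where D="\<lambda>x. {x}"]) (use Dsub[OF i] in auto)
    also have "\<dots> = (\<Prod>x\<in>Dp i. pmf (bernoulli_pmf p) (x = (t,i)))"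
      by (rule prod.cong[OF refl coord])
    also have "\<dots> = pmf (bernoulli_pmf p) True * (\<Prod>x\<in>Dp i - {(t,i)}. pmf (bernoulli_pmf p) (x = (t,i)))"
      by (subst prod.remove[OF finD, of "(t,i)"]) (auto simp: Dp_def)
    also have "\<dots> = p * (1-p) ^ card (Dp i - {(t,i)})"
      unfolding rest using p by simp
    finally have e1: "measure_pmf.prob Q {c. \<not> Bp i c} = p * (1-p) ^ card (Dp i - {(t,i)})"
      using nb by simp
    have "card (Dp i - {(t,i)}) \<le> card ((\<lambda>u. (u, i - sh u)) ` {u\<in>S. sh u < i})"
      by (rule card_mono) (auto simp: Dp_def finS)
    also have "\<dots> \<le> card {u\<in>S. sh u < i}" by (rule card_image_le) (simp add: finS)
    also have "\<dots> \<le> card S" by (rule card_mono[OF finS]) auto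
    also have "\<dots> = M" by (rule S(2))
    finally have "(1-p)^M \<le> (1-p) ^ card (Dp i - {(t,i)})"
      by (rule power_decreasing) (use p in auto)
    then have "p * (1-p)^M \<le> p * (1-p) ^ card (Dp i - {(t,i)})"
      using p by (simp add: mult_left_mono)
    then show ?thesis using c1 e1 by simp
  qed
  have "measure_pmf.prob Q {c. \<forall>i\<in>{1..n}. Bp i c} \<le> (\<Prod>i\<in>{1..n}. 1 - p*(1-p)^M)"
    unfolding prodeq by (rule prod_mono) (use each in auto)
  also have "\<dots> = (1 - p*(1-p)^M)^n" by simp
  finally show ?thesis unfolding bits_pmf_def eqset Q_def I_def .
qed

lemma exp_part:
  fixes M n :: nat
  assumes "M \<ge> 1"
  shows "(1 - (1/(real M+1))*(1-1/(real M+1))^M)^n \<le> exp (- (real n / (real M + 1) * exp (-1)))"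
proof -
  define p :: real where "p = 1/(real M+1)"
  have p0: "0 < p" "p \<le> 1" unfolding p_def by auto
  have a: "1 - p = 1 / (1 + 1/real M)" unfolding p_def using assms by (simp add: field_simps)
  have "(1 + 1/real M)^M \<le> exp (1/real M)^M"
    by (rule power_mono) (auto simp: exp_ge_add_one_self add.commute)
  also have "\<dots> = exp 1" using assms by (simp add: exp_of_nat_mult[symmetric])
  finally have b: "(1 + 1/real M)^M \<le> exp 1" .
  have q: "exp (-1) \<le> (1-p)^M"
  proof -
    have pos: "0 < (1 + 1/real M)^M" by (simp add: add_pos_nonneg)
    have "exp (-1) = 1 / exp (1::real)" by (simp add: exp_minus inverse_eq_divide)
    also have "\<dots> \<le> 1 / (1 + 1/real M)^M" using b pos by (intro divide_left_mono) auto
    finally show ?thesis unfolding a power_one_over .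
  qed
  have "0 \<le> 1 - p*(1-p)^M"
  proof -
    have h: "0 \<le> (1-p)^M" "(1-p)^M \<le> 1" using p0 by (auto intro: power_le_one)
    have "p*(1-p)^M \<le> 1" by (rule mult_le_one) (use p0 h in auto)
    then show ?thesis by simp
  qed
  moreover have "1 - p*(1-p)^M \<le> exp (-(p * exp (-1)))"
  proof -
    have "1 - p*(1-p)^M \<le> exp (-(p*(1-p)^M))" using exp_ge_add_one_self[of "-(p*(1-p)^M)"] by simp
    also have "\<dots> \<le> exp (-(p * exp (-1)))" using q p0 by simp
    finally show ?thesis .
  qed
  ultimately have "(1 - p*(1-p)^M)^n \<le> exp (-(p * exp (-1)))^n" by (auto intro: power_mono)
  also have "\<dots> = exp (- (real n / (real M + 1) * exp (-1)))"
    by (simp add: exp_of_nat_mult[symmetric] p_def)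
  finally show ?thesis unfolding p_def .
qed

theorem mainTheorem2:
  fixes M T n :: nat
  assumes "M \<ge> 1" and "T \<ge> M + 1" and "n \<ge> 1"
  shows "measure_pmf.prob (bits_pmf T n (1 / (real M + 1))) (E_id T M n)
           \<le> exp ((real M + 1) * ln (real T) + real M * ln (real n)
                  - real n / (real M + 1) * exp (-1))"
proof -
  define p :: real where "p = 1 / (real M + 1)"
  have p0: "0 \<le> p" "p \<le> 1" unfolding p_def by auto
  define bnd where "bnd = exp (- (real n / (real M + 1) * exp (-1)))"
  define Sets where "Sets t = {S. S \<subseteq> {1..T} - {t} \<and> card S = M}" for t :: nat
  define X where "X = Sigma {1..T} (\<lambda>t. Sigma (Sets t) (\<lambda>S. PiE S (\<lambda>_. {..<n})))"
  define Cov where "Cov x = (case x of (t, S, sh) \<Rightarrow>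
      {c. covers n (bigor S (\<lambda>u. shift (sh u) (word c u))) (word c t)})" for x :: "nat \<times> nat set \<times> (nat \<Rightarrow> nat)"
  let ?P = "bits_pmf T n p"
  have finSets: "finite (Sets t)" for t unfolding Sets_def by auto
  have cardSets: "card (Sets t) = (T - 1) choose M" if "t \<in> {1..T}" for t
  proof -
    have "card (Sets t) = card ({1..T} - {t}) choose M" unfolding Sets_def by (rule n_subsets) simp
    also have "card ({1..T} - {t}) = T - 1" using that by simp
    finally show ?thesis .
  qed
  have finS: "finite S" if "S \<in> Sets t" for S t
  proof -
    have "S \<subseteq> {1..T}" using that unfolding Sets_def by auto
    then show ?thesis by (rule finite_subset) simp
  qed
  have finPi: "finite (PiE S (\<lambda>_. {..<n}))" if "S \<in> Sets t" for S t
  proof -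
    have fS: "finite S" by (rule finS[OF that])
    show ?thesis by (rule finite_PiE[OF fS finite_lessThan])
  qed
  have finIn: "finite (Sigma (Sets t) (\<lambda>S. PiE S (\<lambda>_. {..<n})))" for t
    by (rule finite_SigmaI[OF finSets finPi])
  have finX: "finite X" unfolding X_def
    by (rule finite_SigmaI[OF _ finIn]) simp
  have cardX: "card X = T * (((T - 1) choose M) * n ^ M)"
  proof -
    have inner: "card (Sigma (Sets t) (\<lambda>S. PiE S (\<lambda>_. {..<n}))) = ((T - 1) choose M) * n ^ M"
      if "t \<in> {1..T}" for t
    proof -
      have "card (Sigma (Sets t) (\<lambda>S. PiE S (\<lambda>_. {..<n}))) = (\<Sum>S\<in>Sets t. card (PiE S (\<lambda>_. {..<n})))"
        by (rule card_SigmaI[OF finSets]) (use finPi in blast)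
      also have "\<dots> = (\<Sum>S\<in>Sets t. n ^ M)"
      proof (rule sum.cong[OF refl])
        fix S assume SS: "S \<in> Sets t"
        have "finite S" by (rule finS[OF SS])
        moreover have "card S = M" using SS unfolding Sets_def by simp
        ultimately show "card (PiE S (\<lambda>_. {..<n})) = n ^ M" by (simp add: card_PiE)
      qed
      also have "\<dots> = ((T - 1) choose M) * n ^ M" by (simp only: sum_constant cardSets[OF that] of_nat_id)
      finally show ?thesis .
    qed
    have "card X = (\<Sum>t\<in>{1..T}. card (Sigma (Sets t) (\<lambda>S. PiE S (\<lambda>_. {..<n}))))"
      unfolding X_def by (rule card_SigmaI) (use finIn in auto)
    also have "\<dots> = (\<Sum>t\<in>{1..T}. ((T - 1) choose M) * n ^ M)"
      by (rule sum.cong[OF refl]) (rule inner)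
    finally show ?thesis by simp
  qed
  have sub: "E_id T M n \<subseteq> (\<Union>x\<in>X. Cov x)"
  proof
    fix c assume "c \<in> E_id T M n"
    then obtain t S sh where t: "t \<in> {1..T}" and S: "S \<subseteq> {1..T} - {t}" "card S = M"
      and sh: "\<forall>u\<in>S. sh u < n"
      and cv: "covers n (bigor S (\<lambda>u. shift (sh u) (word c u))) (word c t)"
      unfolding E_id_def by blast
    have "(t, S, restrict sh S) \<in> X" unfolding X_def Sets_def using t S sh by auto
    moreover have "bigor S (\<lambda>u. shift (restrict sh S u) (word c u)) = bigor S (\<lambda>u. shift (sh u) (word c u))"
      unfolding bigor_def by auto
    then have "c \<in> Cov (t, S, restrict sh S)" unfolding Cov_def using cv by simp
    ultimately show "c \<in> (\<Union>x\<in>X. Cov x)" by blast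
  qed
  have each: "measure_pmf.prob ?P (Cov x) \<le> bnd" if "x \<in> X" for x
  proof -
    obtain t S sh where x: "x = (t, S, sh)" by (cases x) auto
    have t: "t \<in> {1..T}" and S: "S \<subseteq> {1..T} - {t}" "card S = M" and sh: "\<forall>u\<in>S. sh u < n"
      using that unfolding x X_def Sets_def by auto
    have "measure_pmf.prob ?P (Cov x) \<le> (1 - p*(1-p)^M)^n"
      unfolding x Cov_def by (simp only: prod.case) (rule cov_bound[OF p0 t S sh])
    also have "\<dots> \<le> bnd" unfolding p_def bnd_def by (rule exp_part[OF assms(1)])
    finally show ?thesis .
  qed
  have "measure_pmf.prob ?P (E_id T M n) \<le> measure_pmf.prob ?P (\<Union>x\<in>X. Cov x)"
    by (rule measure_pmf.finite_measure_mono[OF sub]) simp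
  also have "\<dots> \<le> (\<Sum>x\<in>X. measure_pmf.prob ?P (Cov x))"
    by (rule measure_pmf.finite_measure_subadditive_finite[OF finX]) simp
  also have "\<dots> \<le> real (card X) * bnd"
    by (rule sum_bounded_above) (rule each)
  also have "\<dots> \<le> real T ^ (M+1) * real n ^ M * bnd"
  proof -
    have "(T - 1) choose M \<le> (T - 1) ^ M" by (rule binomial_le_pow) (use assms in simp)
    also have "\<dots> \<le> T ^ M" by (rule power_mono) auto
    finally have "card X \<le> T * (T ^ M * n ^ M)" unfolding cardX by simp
    also have "T * (T ^ M * n ^ M) = T ^ (M+1) * n ^ M" by simp
    finally have "real (card X) \<le> real (T ^ (M+1) * n ^ M)" by (simp only: of_nat_le_iff)
    then have "real (card X) \<le> real T ^ (M+1) * real n ^ M" by simp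
    then show ?thesis unfolding bnd_def by (rule mult_right_mono) simp
  qed
  also have "\<dots> = exp ((real M + 1) * ln (real T) + real M * ln (real n)
                  - real n / (real M + 1) * exp (-1))"
  proof -
    have T0: "real T > 0" and n0: "real n > 0" using assms by auto
    have "exp ((real M + 1) * ln (real T)) = real T ^ (M+1)"
      using exp_of_nat_mult[of "M+1" "ln (real T)"] T0 by (simp add: add.commute)
    moreover have "exp (real M * ln (real n)) = real n ^ M"
      using exp_of_nat_mult[of M "ln (real n)"] n0 by simp
    moreover have "exp ((real M + 1) * ln (real T) + real M * ln (real n) - real n / (real M + 1) * exp (-1))
       = exp ((real M + 1) * ln (real T)) * exp (real M * ln (real n)) * exp (- (real n / (real M + 1) * exp (-1)))"
      by (simp only: diff_conv_add_uminus exp_add)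
    ultimately show ?thesis unfolding bnd_def by simp
  qed
  finally show ?thesis unfolding p_def .
qed

end
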